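(* There are absolute constants $\kappa_1,\dots,\kappa_5>0$ such that the following holds. For every $n\in\mathbb{N}$, every $\delta\in(0,1)$ and every $\varepsilon$ with $\frac{\kappa_2\log(1/\delta)}{n}\le\varepsilon\le 1$, there exists $\lambda=\lambda(n,\varepsilon,\delta)$ such that the bit-sum protocol $P_{n,\lambda}$ is $(\varepsilon,\delta)$-differentially private in the shuffled model and \[ \lambda\le\begin{cases}\dfrac{\kappa_4\log(1/\delta)}{\varepsilon^2} & \text{if } \varepsilon\ge\sqrt{\dfrac{\kappa_3\log(1/\delta)}{n}},\\[2mm] n-\dfrac{\kappa_5\,\varepsilon\, n^{3/2}}{\sqrt{\log(1/\delta)}} & \text{otherwise.}\end{cases} \]
   Context: An algorithm $M$ on datasets $X=(x_1,\dots,x_n)\in\mathcal{X}^n$ is $(\varepsilon,\delta)$-differentially private if for all neighboring datasets $X\sim X'$ (differing in at most one user's entry) and every set $T$ of outputs, $\Pr[M(X)\in T]\le e^{\varepsilon}\Pr[M(X')\in T]+\delta$. In the shuffled model, each of $n$ users applies a randomized encoder $R$ to its datum and sends the resulting message(s) to a shuffler $S$, which outputs all messages in a uniformly random order; an analyzer $A$ then processes the shuffled messages. A protocol $(R,S,A)$ is $(\varepsilon,\delta)$-differentially private in the shuffled model if the map $(x_1,\dots,x_n)\mapsto S(R(x_1),\dots,R(x_n))$ is $(\varepsilon,\delta)$-differentially private. The bit-sum protocol $P_{n,\lambda}=(R_{n,\lambda},S,A_{n,\lambda})$, for $n$ users with $x_i\in\{0,1\}$ and parameter $\lambda\in(0,n)$: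 each user independently draws $b\sim\mathrm{Ber}(\lambda/n)$ and sends the single bit $y=x_i$ if $b=0$ and $y\sim\mathrm{Ber}(1/2)$ (fresh uniform bit) if $b=1$; the analyzer outputs $\frac{n}{n-\lambda}\left(\sum_{i=1}^n y_i-\frac{\lambda}{2}\right)$. Here $\log$ is the natural logarithm. *)

theory Defs
  imports "HOL-Probability.Probability" "HOL-Combinatorics.Permutations"
begin

definition neighboring :: "'a list \<Rightarrow> 'a list \<Rightarrow> bool" where
  "neighboring X X' \<longleftrightarrow> length X = length X' \<and>
     card {i. i < length X \<and> X ! i \<noteq> X' ! i} \<le> 1"

definition diff_private :: "nat \<Rightarrow> ('a list \<Rightarrow> 'b pmf) \<Rightarrow> real \<Rightarrow> real \<Rightarrow> bool" where
  "diff_private n M eps del \<longleftrightarrow>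
     (\<forall>X X'. length X = n \<longrightarrow> neighboring X X' \<longrightarrow>
        (\<forall>T. measure_pmf.prob (M X) T \<le> exp eps * measure_pmf.prob (M X') T + del))"

definition bitsum_encoder :: "nat \<Rightarrow> real \<Rightarrow> bool \<Rightarrow> bool pmf" where
  "bitsum_encoder n lam x =
     bernoulli_pmf (lam / real n) \<bind> (\<lambda>b. if b then bernoulli_pmf (1/2) else return_pmf x)"

fun encode_all :: "('a \<Rightarrow> 'b pmf) \<Rightarrow> 'a list \<Rightarrow> 'b list pmf" where
  "encode_all R [] = return_pmf []"
| "encode_all R (x # xs) =
     R x \<bind> (\<lambda>y. encode_all R xs \<bind> (\<lambda>ys. return_pmf (y # ys)))"

definition shuffler :: "'b list \<Rightarrow> 'b list pmf" where
  "shuffler ys = pmf_of_set {\<sigma>. \<sigma> permutes {..<length ys}} \<bind>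
                   (\<lambda>\<sigma>. return_pmf (permute_list \<sigma> ys))"

definition shuffled_view :: "('a \<Rightarrow> 'b pmf) \<Rightarrow> 'a list \<Rightarrow> 'b list pmf" where
  "shuffled_view R X = encode_all R X \<bind> shuffler"

text \<open>Analyzer A_{n,lambda} (not needed for privacy, recorded for completeness).\<close>
definition bitsum_analyzer :: "nat \<Rightarrow> real \<Rightarrow> bool list \<Rightarrow> real" where
  "bitsum_analyzer n lam ys =
     real n / (real n - lam) * (real (length (filter id ys)) - lam / 2)"

definition bitsum_shuffled_dp :: "nat \<Rightarrow> real \<Rightarrow> real \<Rightarrow> real \<Rightarrow> bool" where
  "bitsum_shuffled_dp n lam eps del \<longleftrightarrow>
     diff_private n (shuffled_view (bitsum_encoder n lam)) eps del"

end

theory Submission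
  imports Defs
begin

lemma prob_bind_finite:
  assumes "finite (set_pmf P)"
  shows "measure_pmf.prob (bind_pmf P g) T = (\<Sum>x\<in>set_pmf P. pmf P x * measure_pmf.prob (g x) T)"
proof -
  have "ennreal (measure_pmf.prob (bind_pmf P g) T) = emeasure (measure_pmf (bind_pmf P g)) T"
    by (simp add: measure_pmf.emeasure_eq_measure)
  also have "\<dots> = (\<integral>\<^sup>+x. emeasure (measure_pmf (g x)) T \<partial>measure_pmf P)" by simp
  also have "\<dots> = (\<Sum>x\<in>set_pmf P. emeasure (measure_pmf (g x)) T * ennreal (pmf P x))"
    using assms by (subst nn_integral_measure_pmf_finite) auto
  also have "\<dots> = (\<Sum>x\<in>set_pmf P. ennreal (pmf P x * measure_pmf.prob (g x) T))"
    by (intro sum.cong refl) (simp add: measure_pmf.emeasure_eq_measure ennreal_mult' mult.commute)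
  also have "\<dots> = ennreal (\<Sum>x\<in>set_pmf P. pmf P x * measure_pmf.prob (g x) T)"
    by (rule sum_ennreal) simp
  finally show ?thesis
    by (subst (asm) ennreal_inj) (auto intro!: sum_nonneg)
qed

definition hs :: "real \<Rightarrow> 'a pmf \<Rightarrow> 'a pmf \<Rightarrow> real" where
  "hs e P Q = (\<Sum>x\<in>set_pmf P. max 0 (pmf P x - e * pmf Q x))"

lemma hs_sum:
  assumes "finite S" "set_pmf P \<subseteq> S" "0 \<le> e"
  shows "hs e P Q = (\<Sum>x\<in>S. max 0 (pmf P x - e * pmf Q x))"
  unfolding hs_def
proof (rule sum.mono_neutral_left[OF assms(1,2)])
  show "\<forall>i\<in>S - set_pmf P. max 0 (pmf P i - e * pmf Q i) = 0"
  proof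
    fix i assume "i \<in> S - set_pmf P"
    then have "pmf P i = 0" by (simp add: set_pmf_iff)
    moreover have "0 \<le> e * pmf Q i" using assms(3) by simp
    ultimately show "max 0 (pmf P i - e * pmf Q i) = 0" by simp
  qed
qed

lemma hs_nonneg: "0 \<le> hs e P Q"
  unfolding hs_def by (intro sum_nonneg) auto

lemma hs_le_1:
  assumes "0 \<le> e"
  shows "hs e P Q \<le> 1"
proof (cases "finite (set_pmf P)")
  case True
  have "hs e P Q \<le> (\<Sum>x\<in>set_pmf P. pmf P x)"
    unfolding hs_def using assms by (intro sum_mono) auto
  also have "\<dots> = 1" using True by (rule sum_pmf_eq_1) auto
  finally show ?thesis .
qed (simp add: hs_def)

lemma hs_mono_e:
  assumes "e \<le> e'"
  shows "hs e' P Q \<le> hs e P Q"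
  unfolding hs_def
proof (intro sum_mono)
  fix x
  have "e * pmf Q x \<le> e' * pmf Q x" using assms by (intro mult_right_mono) auto
  then show "max 0 (pmf P x - e' * pmf Q x) \<le> max 0 (pmf P x - e * pmf Q x)" by auto
qed

lemma hs_post:
  assumes fP: "finite (set_pmf P)" and fQ: "finite (set_pmf Q)" and e: "0 \<le> e"
  shows "measure_pmf.prob (bind_pmf P g) T \<le> e * measure_pmf.prob (bind_pmf Q g) T + hs e P Q"
proof -
  define S where "S = set_pmf P \<union> set_pmf Q"
  have fS: "finite S" using fP fQ by (simp add: S_def)
  define f where "f x = measure_pmf.prob (g x) T" for x
  have f01: "0 \<le> f x" "f x \<le> 1" for x by (auto simp: f_def)
  have eqP: "measure_pmf.prob (bind_pmf P g) T = (\<Sum>x\<in>S. pmf P x * f x)"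
    unfolding prob_bind_finite[OF fP] f_def S_def
    by (rule sum.mono_neutral_left) (auto simp: fP fQ set_pmf_iff)
  have eqQ: "measure_pmf.prob (bind_pmf Q g) T = (\<Sum>x\<in>S. pmf Q x * f x)"
    unfolding prob_bind_finite[OF fQ] f_def S_def
    by (rule sum.mono_neutral_left) (auto simp: fP fQ set_pmf_iff)
  have "(\<Sum>x\<in>S. pmf P x * f x) \<le> (\<Sum>x\<in>S. e * (pmf Q x * f x) + max 0 (pmf P x - e * pmf Q x))"
  proof (intro sum_mono)
    fix x
    have "pmf P x * f x \<le> (e * pmf Q x + max 0 (pmf P x - e * pmf Q x)) * f x"
      using f01[of x] by (intro mult_right_mono) auto
    also have "\<dots> \<le> e * (pmf Q x * f x) + max 0 (pmf P x - e * pmf Q x)"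
      using f01[of x] by (simp add: algebra_simps) (rule mult_left_le_one_le, auto)
    finally show "pmf P x * f x \<le> e * (pmf Q x * f x) + max 0 (pmf P x - e * pmf Q x)" .
  qed
  also have "\<dots> = e * (\<Sum>x\<in>S. pmf Q x * f x) + hs e P Q"
    by (simp add: sum.distrib sum_distrib_left hs_sum[OF fS _ e] S_def)
  finally show ?thesis using eqP eqQ by simp
qed

lemma pmf_bind_finite:
  assumes "finite (set_pmf \<mu>)"
  shows "pmf (bind_pmf \<mu> F) x = (\<Sum>z\<in>set_pmf \<mu>. pmf \<mu> z * pmf (F z) x)"
  unfolding pmf_bind using assms
  by (subst integral_measure_pmf_real[where A="set_pmf \<mu>"]) (auto simp: mult.commute)

lemma hs_mix:
  assumes fm: "finite (set_pmf \<mu>)" and fF: "\<And>z. z \<in> set_pmf \<mu> \<Longrightarrow> finite (set_pmf (F z))"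
    and e: "0 \<le> e"
  shows "hs e (bind_pmf \<mu> F) (bind_pmf \<mu> G) \<le> (\<Sum>z\<in>set_pmf \<mu>. pmf \<mu> z * hs e (F z) (G z))"
proof -
  define S where "S = (\<Union>z\<in>set_pmf \<mu>. set_pmf (F z))"
  have fS: "finite S" using fm fF by (auto simp: S_def)
  have sub: "set_pmf (bind_pmf \<mu> F) \<subseteq> S" by (auto simp: S_def)
  have "hs e (bind_pmf \<mu> F) (bind_pmf \<mu> G) =
      (\<Sum>x\<in>S. max 0 (\<Sum>z\<in>set_pmf \<mu>. pmf \<mu> z * (pmf (F z) x - e * pmf (G z) x)))"
    by (simp add: hs_sum[OF fS sub e] pmf_bind_finite[OF fm] sum_subtractf sum_distrib_left
        algebra_simps)
  also have "\<dots> \<le> (\<Sum>x\<in>S. \<Sum>z\<in>set_pmf \<mu>. pmf \<mu> z * max 0 (pmf (F z) x - e * pmf (G z) x))"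
  proof (intro sum_mono)
    fix x
    have "(\<Sum>z\<in>set_pmf \<mu>. pmf \<mu> z * (pmf (F z) x - e * pmf (G z) x))
        \<le> (\<Sum>z\<in>set_pmf \<mu>. pmf \<mu> z * max 0 (pmf (F z) x - e * pmf (G z) x))"
      by (intro sum_mono mult_left_mono) auto
    moreover have "0 \<le> (\<Sum>z\<in>set_pmf \<mu>. pmf \<mu> z * max 0 (pmf (F z) x - e * pmf (G z) x))"
      by (intro sum_nonneg) auto
    ultimately show "max 0 (\<Sum>z\<in>set_pmf \<mu>. pmf \<mu> z * (pmf (F z) x - e * pmf (G z) x))
        \<le> (\<Sum>z\<in>set_pmf \<mu>. pmf \<mu> z * max 0 (pmf (F z) x - e * pmf (G z) x))" by simp
  qed
  also have "\<dots> = (\<Sum>z\<in>set_pmf \<mu>. pmf \<mu> z * (\<Sum>x\<in>S. max 0 (pmf (F z) x - e * pmf (G z) x)))"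
    by (subst sum.swap) (simp add: sum_distrib_left)
  also have "\<dots> = (\<Sum>z\<in>set_pmf \<mu>. pmf \<mu> z * hs e (F z) (G z))"
  proof (intro sum.cong refl)
    fix z assume z: "z \<in> set_pmf \<mu>"
    have "set_pmf (F z) \<subseteq> S" using z by (auto simp: S_def)
    then show "pmf \<mu> z * (\<Sum>x\<in>S. max 0 (pmf (F z) x - e * pmf (G z) x)) = pmf \<mu> z * hs e (F z) (G z)"
      by (simp add: hs_sum[OF fS _ e])
  qed
  finally show ?thesis .
qed

lemma hs_map_inj:
  assumes "inj f"
  shows "hs e (map_pmf f P) (map_pmf f Q) = hs e P Q"
proof -
  have "hs e (map_pmf f P) (map_pmf f Q) =
      (\<Sum>x\<in>f ` set_pmf P. max 0 (pmf (map_pmf f P) x - e * pmf (map_pmf f Q) x))"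
    by (simp add: hs_def)
  also have "\<dots> = (\<Sum>x\<in>set_pmf P. max 0 (pmf (map_pmf f P) (f x) - e * pmf (map_pmf f Q) (f x)))"
    using assms by (subst sum.reindex) (auto intro: inj_on_subset)
  also have "\<dots> = hs e P Q"
    by (simp add: hs_def pmf_map_inj'[OF assms])
  finally show ?thesis .
qed

definition nc :: "bool list \<Rightarrow> nat" where "nc ys = length (filter id ys)"

definition cntd :: "(bool \<Rightarrow> bool pmf) \<Rightarrow> bool list \<Rightarrow> nat pmf" where
  "cntd R xs = map_pmf nc (encode_all R xs)"

lemma cntd_Nil: "cntd R [] = return_pmf 0"
  by (simp add: cntd_def nc_def)

lemma cntd_Cons: "cntd R (x # xs) = bind_pmf (R x) (\<lambda>y. map_pmf (\<lambda>c. of_bool y + c) (cntd R xs))"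
  by (auto simp: cntd_def nc_def map_bind_pmf map_pmf_def[symmetric] pmf.map_comp o_def
      intro!: bind_pmf_cong map_pmf_cong)

lemma cntd_split:
  "cntd R (xs @ x # ys) = bind_pmf (cntd R (xs @ ys)) (\<lambda>k. map_pmf (\<lambda>y. k + of_bool y) (R x))"
proof (induction xs)
  case Nil
  show ?case
    by (simp add: cntd_Cons map_pmf_def bind_assoc_pmf bind_return_pmf add.commute)
       (subst bind_commute_pmf, rule refl)
next
  case (Cons z xs)
  show ?case
    by (simp add: cntd_Cons Cons.IH map_pmf_def bind_assoc_pmf bind_return_pmf add_ac)
qed

fun mu :: "real \<Rightarrow> bool list \<Rightarrow> (nat \<times> nat) pmf" where
  "mu p [] = return_pmf (0, 0)"
| "mu p (z # zs) = bind_pmf (bernoulli_pmf p)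
     (\<lambda>b. map_pmf (\<lambda>(c, m). if b then (c, Suc m) else (c + of_bool z, m)) (mu p zs))"

lemma finite_mu: "finite (set_pmf (mu p zs))"
  by (induction zs) (auto simp: split_beta)

lemma mu_snd:
  assumes "0 \<le> p" "p \<le> 1"
  shows "map_pmf snd (mu p zs) = binomial_pmf (length zs) p"
proof (induction zs)
  case Nil
  then show ?case using assms by (simp add: binomial_pmf_0)
next
  case (Cons z zs)
  have "map_pmf snd (mu p (z # zs)) =
      bind_pmf (bernoulli_pmf p) (\<lambda>b. map_pmf (\<lambda>m. if b then Suc m else m) (map_pmf snd (mu p zs)))"
    by (simp add: map_bind_pmf pmf.map_comp o_def split_beta if_distrib cong: if_cong)
  also have "\<dots> = binomial_pmf (Suc (length zs)) p"
    using assms unfolding Cons.IH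
    by (subst binomial_pmf_Suc) (auto simp: map_pmf_def intro!: bind_pmf_cong)
  finally show ?case by simp
qed

lemma binomial_half_Suc:
  "binomial_pmf (Suc m) (1/2) =
     bind_pmf (bernoulli_pmf (1/2)) (\<lambda>y. map_pmf (\<lambda>k. of_bool y + k) (binomial_pmf m (1/2)))"
  by (subst binomial_pmf_Suc) (auto simp: map_pmf_def intro!: bind_pmf_cong)

lemma cntd_mu:
  assumes "p = lam / real n" "0 \<le> p" "p \<le> 1"
  shows "cntd (bitsum_encoder n lam) zs =
     bind_pmf (mu p zs) (\<lambda>(c, m). map_pmf ((+) c) (binomial_pmf m (1/2)))"
proof (induction zs)
  case Nil
  then show ?case by (simp add: cntd_Nil binomial_pmf_0 bind_return_pmf)
next
  case (Cons z zs)
  define G where "G = (\<lambda>(c, m). map_pmf ((+) c) (binomial_pmf m (1/2)))"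
  have "cntd (bitsum_encoder n lam) (z # zs) =
     bind_pmf (bernoulli_pmf p) (\<lambda>b. bind_pmf (if b then bernoulli_pmf (1/2) else return_pmf z)
        (\<lambda>y. map_pmf (\<lambda>c. of_bool y + c) (bind_pmf (mu p zs) G)))"
    by (simp add: cntd_Cons Cons.IH bitsum_encoder_def bind_assoc_pmf assms(1) G_def)
  also have "\<dots> = bind_pmf (bernoulli_pmf p) (\<lambda>b. bind_pmf (mu p zs)
        (\<lambda>cm. G (if b then (fst cm, Suc (snd cm)) else (fst cm + of_bool z, snd cm))))"
  proof (intro bind_pmf_cong refl)
    fix b :: bool
    show "bind_pmf (if b then bernoulli_pmf (1/2) else return_pmf z)
        (\<lambda>y. map_pmf (\<lambda>c. of_bool y + c) (bind_pmf (mu p zs) G)) =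
       bind_pmf (mu p zs) (\<lambda>cm. G (if b then (fst cm, Suc (snd cm)) else (fst cm + of_bool z, snd cm)))"
    proof (cases b)
      case True
      have "bind_pmf (bernoulli_pmf (1/2))
          (\<lambda>y. map_pmf (\<lambda>c. of_bool y + c) (bind_pmf (mu p zs) G)) =
          bind_pmf (mu p zs) (\<lambda>cm. bind_pmf (bernoulli_pmf (1/2))
          (\<lambda>y. map_pmf (\<lambda>c. of_bool y + c) (G cm)))"
        by (simp add: map_bind_pmf) (subst bind_commute_pmf, rule refl)
      also have "\<dots> = bind_pmf (mu p zs) (\<lambda>cm. G (fst cm, Suc (snd cm)))"
        by (auto simp: G_def split_beta binomial_half_Suc map_bind_pmf pmf.map_comp o_def add_ac
            intro!: bind_pmf_cong map_pmf_cong)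
      finally show ?thesis using True by simp
    next
      case False
      then show ?thesis
        by (auto simp: G_def split_beta map_bind_pmf pmf.map_comp o_def add_ac bind_return_pmf
            intro!: bind_pmf_cong map_pmf_cong)
    qed
  qed
  also have "\<dots> = bind_pmf (mu p (z # zs)) G"
    by (simp add: bind_assoc_pmf map_pmf_def bind_return_pmf split_beta)
  finally show ?case by (simp add: G_def)
qed

definition core :: "nat \<Rightarrow> (bool \<Rightarrow> bool pmf) \<Rightarrow> bool \<Rightarrow> nat pmf" where
  "core m R x = bind_pmf (binomial_pmf m (1/2)) (\<lambda>k. map_pmf (\<lambda>y. k + of_bool y) (R x))"

lemma finite_core: "finite (set_pmf (core m R x))"
  unfolding core_def by (auto intro!: finite_set_pmf_binomial_pmf)

lemma cntd_decomp:
  assumes "p = lam / real n" "0 \<le> p" "p \<le> 1"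
  shows "cntd (bitsum_encoder n lam) (xs @ x # ys) =
     bind_pmf (mu p (xs @ ys)) (\<lambda>cm. map_pmf ((+) (fst cm)) (core (snd cm) (bitsum_encoder n lam) x))"
  unfolding cntd_split cntd_mu[OF assms]
  by (simp add: bind_assoc_pmf split_beta core_def map_bind_pmf bind_map_pmf pmf.map_comp o_def add_ac)

lemma sum_binomial_support:
  assumes "0 \<le> p" "p \<le> 1"
  shows "measure_pmf.expectation (binomial_pmf N p) h = (\<Sum>k\<le>N. pmf (binomial_pmf N p) k * h k)"
  using assms by (subst integral_measure_pmf_real[where A="{..N}"])
     (auto simp: set_pmf_binomial_eq mult.commute split: if_splits)

lemma hs_cntd:
  assumes "p = lam / real n" "0 \<le> p" "p \<le> 1" "0 \<le> e"
  shows "hs e (cntd (bitsum_encoder n lam) (xs @ x # ys)) (cntd (bitsum_encoder n lam) (xs @ x' # ys))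
    \<le> (\<Sum>k\<le>length xs + length ys. pmf (binomial_pmf (length xs + length ys) p) k *
          hs e (core k (bitsum_encoder n lam) x) (core k (bitsum_encoder n lam) x'))"
proof -
  define R where "R = bitsum_encoder n lam"
  define h where "h k = hs e (core k R x) (core k R x')" for k
  define \<mu> where "\<mu> = mu p (xs @ ys)"
  have "hs e (cntd R (xs @ x # ys)) (cntd R (xs @ x' # ys))
     \<le> (\<Sum>z\<in>set_pmf \<mu>. pmf \<mu> z * hs e (map_pmf ((+) (fst z)) (core (snd z) R x))
                                         (map_pmf ((+) (fst z)) (core (snd z) R x')))"
    unfolding R_def cntd_decomp[OF assms(1-3)] \<mu>_def
    by (rule hs_mix) (auto simp: finite_mu finite_core assms)
  also have "\<dots> = (\<Sum>z\<in>set_pmf \<mu>. (h \<circ> snd) z * pmf \<mu> z)"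
    by (simp add: hs_map_inj h_def mult.commute)
  also have "\<dots> = measure_pmf.expectation \<mu> (h \<circ> snd)"
    by (subst integral_measure_pmf_real[where A="set_pmf \<mu>"]) (auto simp: \<mu>_def finite_mu)
  also have "\<dots> = measure_pmf.expectation (map_pmf snd \<mu>) h"
    by (simp add: o_def)
  also have "map_pmf snd \<mu> = binomial_pmf (length xs + length ys) p"
    unfolding \<mu>_def using assms by (simp add: mu_snd)
  finally show ?thesis
    using assms by (simp add: sum_binomial_support h_def R_def)
qed

lemma shuffler_mset:
  assumes "mset xs = mset ys"
  shows "shuffler xs = shuffler ys"
proof -
  obtain \<pi> where \<pi>: "\<pi> permutes {..<length ys}" "permute_list \<pi> ys = xs"
    using mset_eq_permutation[OF assms] by blast
  have len: "length xs = length ys" using assms mset_eq_length by blast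
  define A where "A = {\<sigma>. \<sigma> permutes {..<length ys}}"
  have fA: "finite A" "A \<noteq> {}" unfolding A_def
    by (auto intro: finite_permutations permutes_id)
  have inj: "inj_on ((\<circ>) \<pi>) A"
  proof (rule inj_onI)
    fix s t assume "\<pi> \<circ> s = \<pi> \<circ> t"
    then show "s = t" using permutes_inj[OF \<pi>(1)]
      by (metis fun.inj_map inj_eq)
  qed
  have img: "(\<circ>) \<pi> ` A = A"
  proof
    show "(\<circ>) \<pi> ` A \<subseteq> A" using \<pi>(1) by (auto simp: A_def intro: permutes_compose)
  next
    show "A \<subseteq> (\<circ>) \<pi> ` A"
    proof
      fix t assume t: "t \<in> A"
      have "inv \<pi> \<circ> t \<in> A" using t \<pi>(1) by (auto simp: A_def intro: permutes_compose permutes_inv)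
      moreover have "\<pi> \<circ> (inv \<pi> \<circ> t) = t"
        using permutes_inverses(1)[OF \<pi>(1)] by (auto simp: fun_eq_iff)
      ultimately show "t \<in> (\<circ>) \<pi> ` A" by (metis image_eqI)
    qed
  qed
  have "shuffler xs = bind_pmf (pmf_of_set A) (\<lambda>\<sigma>. return_pmf (permute_list (\<pi> \<circ> \<sigma>) ys))"
    unfolding shuffler_def len A_def
  proof (intro bind_pmf_cong refl)
    fix \<sigma> assume "\<sigma> \<in> set_pmf (pmf_of_set {\<sigma>. \<sigma> permutes {..<length ys}})"
    then have "\<sigma> permutes {..<length ys}" using fA unfolding A_def by simp
    then show "return_pmf (permute_list \<sigma> xs) = return_pmf (permute_list (\<pi> \<circ> \<sigma>) ys)"
      by (simp add: permute_list_compose \<pi>(2))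
  qed
  also have "\<dots> = bind_pmf (map_pmf ((\<circ>) \<pi>) (pmf_of_set A)) (\<lambda>\<sigma>. return_pmf (permute_list \<sigma> ys))"
    by (simp add: bind_map_pmf)
  also have "map_pmf ((\<circ>) \<pi>) (pmf_of_set A) = pmf_of_set A"
    using map_pmf_of_set_inj[OF inj fA(2,1)] img by simp
  finally show ?thesis by (simp add: shuffler_def A_def)
qed

definition Kn :: "nat \<Rightarrow> nat \<Rightarrow> bool list pmf" where
  "Kn n k = shuffler (replicate k True @ replicate (n - k) False)"

lemma count_list_filter: "count_list ys b = length (filter ((=) b) ys)"
  by (induction ys) auto

lemma filter_True_id: "filter ((=) True) ys = filter id ys" "filter ((=) False) ys = filter Not ys"
  by (induction ys) auto

lemma mset_bool_list:
  "mset ys = mset (replicate (nc ys) True @ replicate (length ys - nc ys) False)"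
proof (rule multiset_eqI)
  fix b :: bool
  have c: "length (filter Not ys) = length ys - length (filter id ys)"
    using sum_length_filter_compl[of id ys] by (simp add: comp_def)
  show "count (mset ys) b = count (mset (replicate (nc ys) True @ replicate (length ys - nc ys) False)) b"
  proof (cases b)
    case True
    then show ?thesis by (simp add: nc_def count_mset count_list_filter filter_True_id)
  next
    case False
    then show ?thesis by (simp add: nc_def count_mset count_list_filter filter_True_id c)
  qed
qed

lemma length_encode_all: "ys \<in> set_pmf (encode_all R xs) \<Longrightarrow> length ys = length xs"
  by (induction xs arbitrary: ys) auto

lemma finite_encode_all: "finite (set_pmf (encode_all (R :: 'a \<Rightarrow> bool pmf) xs))"
proof -
  have "set_pmf (encode_all R xs) \<subseteq> {ys. set ys \<subseteq> UNIV \<and> length ys = length xs}"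
    using length_encode_all by auto
  moreover have "finite {ys. set ys \<subseteq> (UNIV::bool set) \<and> length ys = length xs}"
    by (rule finite_lists_length_eq) simp
  ultimately show ?thesis by (rule finite_subset)
qed

lemma finite_cntd: "finite (set_pmf (cntd R xs))"
  by (simp add: cntd_def finite_encode_all)

lemma shuffled_view_cntd:
  "shuffled_view R xs = bind_pmf (cntd R xs) (Kn (length xs))"
  unfolding shuffled_view_def cntd_def bind_map_pmf
  apply (intro bind_pmf_cong refl)
  subgoal premises prems for ys
  proof -
    have "length ys = length xs" using prems by (rule length_encode_all)
    then show ?thesis
      using shuffler_mset[OF mset_bool_list[of ys]] by (simp add: Kn_def)
  qed
  done

lemma dp_from_hs:
  assumes "0 \<le> e" "length xs' = length xs"
  shows "measure_pmf.prob (shuffled_view R xs) T \<le> e * measure_pmf.prob (shuffled_view R xs') T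
     + hs e (cntd R xs) (cntd R xs')"
  using assms(2) hs_post[OF finite_cntd finite_cntd assms(1)] by (simp add: shuffled_view_cntd)

lemma encoder_bernoulli:
  assumes "p = lam / real n" "0 \<le> p" "p \<le> 1"
  shows "bitsum_encoder n lam x = bernoulli_pmf (if x then 1 - p/2 else p/2)"
proof (rule pmf_eqI)
  fix y :: bool
  show "pmf (bitsum_encoder n lam x) y = pmf (bernoulli_pmf (if x then 1 - p/2 else p/2)) y"
    unfolding bitsum_encoder_def pmf_bind using assms
    by (subst integral_bernoulli_pmf) (auto simp: assms(1)[symmetric] pmf_return algebra_simps
        split: split_indicator)
qed

lemma pmf_map_Suc: "pmf (map_pmf Suc M) s = (if s = 0 then 0 else pmf M (s - 1))"
proof (cases s)
  case 0
  then show ?thesis by (simp add: pmf_eq_0_set_pmf)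
next
  case (Suc k)
  then show ?thesis using pmf_map_inj'[of Suc M k] by simp
qed

lemma core_alt:
  assumes "R x = bernoulli_pmf a"
  shows "core m R x = bind_pmf (bernoulli_pmf a) (\<lambda>y. if y then map_pmf Suc (binomial_pmf m (1/2))
           else binomial_pmf m (1/2))"
  unfolding core_def assms map_pmf_def
  by (subst bind_commute_pmf) (auto intro!: bind_pmf_cong simp: bind_return_pmf' bind_return_pmf)

lemma pmf_core:
  assumes "R x = bernoulli_pmf a" "0 \<le> a" "a \<le> 1"
  shows "pmf (core m R x) s = a * pmf (map_pmf Suc (binomial_pmf m (1/2))) s
            + (1 - a) * pmf (binomial_pmf m (1/2)) s"
  unfolding core_alt[of R x a m, OF assms(1)] pmf_bind using assms(2,3)
  by (subst integral_bernoulli_pmf) (auto simp: algebra_simps)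

lemma set_binomial_half: "set_pmf (binomial_pmf m (1/2)) = {..m}"
  by (simp add: set_pmf_binomial)

lemma set_core: "set_pmf (core m R x) \<subseteq> {..Suc m}"
  unfolding core_def by (auto simp: set_binomial_half)

lemma max0_mult: "0 \<le> (c::real) \<Longrightarrow> max 0 (c * y) = c * max 0 y"
proof (cases "0 \<le> y")
  case True
  assume "0 \<le> c" then show ?thesis using True by (simp add: max_def)
next
  case False
  assume c: "0 \<le> c"
  then have "c * y \<le> 0" using False by (simp add: mult_nonneg_nonpos)
  then show ?thesis using False by (simp add: max_def)
qed

lemma hs_core_tv:
  assumes Rx: "R x = bernoulli_pmf a" and Rx': "R x' = bernoulli_pmf b"
    and ab: "0 \<le> a" "a \<le> 1" "0 \<le> b" "b \<le> 1" and e: "1 \<le> e"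
  shows "hs e (core m R x) (core m R x') \<le>
     \<bar>a - b\<bar> * max (hs 1 (map_pmf Suc (binomial_pmf m (1/2))) (binomial_pmf m (1/2)))
                      (hs 1 (binomial_pmf m (1/2)) (map_pmf Suc (binomial_pmf m (1/2))))"
proof -
  define B where "B = binomial_pmf m (1/2)"
  define S where "S = map_pmf Suc B"
  define U where "U = {..Suc m}"
  have fU: "finite U" by (simp add: U_def)
  have sB: "set_pmf B \<subseteq> U" by (auto simp: B_def U_def set_binomial_half)
  have sS: "set_pmf S \<subseteq> U" by (auto simp: S_def B_def U_def set_binomial_half)
  have P: "pmf (core m R x) s = a * pmf S s + (1 - a) * pmf B s" for s
    using pmf_core[of R x a m s] Rx ab by (simp add: S_def B_def)
  have Q: "pmf (core m R x') s = b * pmf S s + (1 - b) * pmf B s" for s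
    using pmf_core[of R x' b m s] Rx' ab by (simp add: S_def B_def)
  have "hs e (core m R x) (core m R x') = (\<Sum>s\<in>U. max 0 (pmf (core m R x) s - e * pmf (core m R x') s))"
    using e by (intro hs_sum[OF fU]) (auto simp: U_def dest: set_core[THEN subsetD])
  also have "\<dots> \<le> (\<Sum>s\<in>U. max 0 ((a - b) * (pmf S s - pmf B s)))"
  proof (intro sum_mono)
    fix s
    have "pmf (core m R x') s \<le> e * pmf (core m R x') s"
      using e mult_right_mono[of 1 e "pmf (core m R x') s"] by simp
    then show "max 0 (pmf (core m R x) s - e * pmf (core m R x') s) \<le> max 0 ((a - b) * (pmf S s - pmf B s))"
      unfolding P Q by (auto simp: algebra_simps)
  qed
  also have "\<dots> \<le> \<bar>a - b\<bar> * max (hs 1 S B) (hs 1 B S)"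
  proof (cases "b \<le> a")
    case True
    have "(\<Sum>s\<in>U. max 0 ((a - b) * (pmf S s - pmf B s))) = (a - b) * (\<Sum>s\<in>U. max 0 (pmf S s - 1 * pmf B s))"
    proof -
      have "max 0 ((a - b) * (pmf S s - pmf B s)) = (a - b) * max 0 (pmf S s - 1 * pmf B s)" for s
        using True max0_mult[of "a - b" "pmf S s - pmf B s"] by simp
      then show ?thesis by (simp add: sum_distrib_left)
    qed
    also have "\<dots> = (a - b) * hs 1 S B" by (simp add: hs_sum[OF fU sS])
    also have "\<dots> \<le> \<bar>a - b\<bar> * max (hs 1 S B) (hs 1 B S)" using True
      by (intro mult_mono) (auto simp: hs_nonneg)
    finally show ?thesis .
  next
    case False
    have "(\<Sum>s\<in>U. max 0 ((a - b) * (pmf S s - pmf B s))) = (b - a) * (\<Sum>s\<in>U. max 0 (pmf B s - 1 * pmf S s))"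
    proof -
      have "max 0 ((a - b) * (pmf S s - pmf B s)) = (b - a) * max 0 (pmf B s - 1 * pmf S s)" for s
        using False max0_mult[of "b - a" "pmf B s - pmf S s"] by (simp add: algebra_simps)
      then show ?thesis by (simp add: sum_distrib_left)
    qed
    also have "\<dots> = (b - a) * hs 1 B S" by (simp add: hs_sum[OF fU sB])
    also have "\<dots> \<le> \<bar>a - b\<bar> * max (hs 1 S B) (hs 1 B S)" using False
      by (intro mult_mono) (auto simp: hs_nonneg)
    finally show ?thesis .
  qed
  finally show ?thesis by (simp add: S_def B_def)
qed

definition coinA :: "nat pmf" where "coinA = map_pmf of_bool (bernoulli_pmf (1/2))"

lemma pmf_coinA: "pmf coinA s = (if s = 0 then 1/2 else if s = 1 then 1/2 else 0)"
  unfolding coinA_def map_pmf_def pmf_bind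
  by (subst integral_bernoulli_pmf) (auto simp: pmf_return split: split_indicator)

lemma set_coinA: "set_pmf coinA \<subseteq> {0, 1}"
  by (auto simp: coinA_def)

lemma hs_coinA: "hs 1 (map_pmf Suc coinA) coinA \<le> 1/2" "hs 1 coinA (map_pmf Suc coinA) \<le> 1/2"
proof -
  have f: "finite {0, 1, 2::nat}" by simp
  have s1: "set_pmf (map_pmf Suc coinA) \<subseteq> {0, 1, 2}" using set_coinA by auto
  have s2: "set_pmf coinA \<subseteq> {0, 1, 2}" using set_coinA by auto
  show "hs 1 (map_pmf Suc coinA) coinA \<le> 1/2"
    by (simp add: hs_sum[OF f s1] pmf_map_Suc pmf_coinA)
  show "hs 1 coinA (map_pmf Suc coinA) \<le> 1/2"
    by (simp add: hs_sum[OF f s2] pmf_map_Suc pmf_coinA)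
qed

lemma binomial_half_Suc':
  "binomial_pmf (Suc m) (1/2) = bind_pmf (binomial_pmf m (1/2)) (\<lambda>k. map_pmf ((+) k) coinA)"
  unfolding binomial_half_Suc coinA_def map_pmf_def
  by (subst bind_commute_pmf) (simp add: bind_assoc_pmf bind_return_pmf add.commute)

lemma hs_binomial_shift:
  "hs 1 (map_pmf Suc (binomial_pmf (Suc m) (1/2))) (binomial_pmf (Suc m) (1/2)) \<le> 1/2"
  "hs 1 (binomial_pmf (Suc m) (1/2)) (map_pmf Suc (binomial_pmf (Suc m) (1/2))) \<le> 1/2"
proof -
  define \<mu> where "\<mu> = binomial_pmf m (1/2)"
  have fm: "finite (set_pmf \<mu>)" by (simp add: \<mu>_def set_binomial_half)
  have fc: "finite (set_pmf (map_pmf ((+) k) coinA))" "finite (set_pmf (map_pmf ((+) k) (map_pmf Suc coinA)))" for k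
    using set_coinA by (auto intro: finite_subset)
  have eq1: "map_pmf Suc (binomial_pmf (Suc m) (1/2)) = bind_pmf \<mu> (\<lambda>k. map_pmf ((+) k) (map_pmf Suc coinA))"
    unfolding binomial_half_Suc' \<mu>_def by (simp add: map_bind_pmf pmf.map_comp o_def)
  have eq2: "binomial_pmf (Suc m) (1/2) = bind_pmf \<mu> (\<lambda>k. map_pmf ((+) k) coinA)"
    unfolding binomial_half_Suc' \<mu>_def ..
  have sum1: "(\<Sum>z\<in>set_pmf \<mu>. pmf \<mu> z) = 1" using fm by (rule sum_pmf_eq_1) auto
  have "hs 1 (map_pmf Suc (binomial_pmf (Suc m) (1/2))) (binomial_pmf (Suc m) (1/2))
      \<le> (\<Sum>z\<in>set_pmf \<mu>. pmf \<mu> z * hs 1 (map_pmf ((+) z) (map_pmf Suc coinA)) (map_pmf ((+) z) coinA))"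
    by (subst eq1, subst eq2, rule hs_mix[OF fm fc(2)]) simp
  also have "\<dots> = (\<Sum>z\<in>set_pmf \<mu>. pmf \<mu> z) * hs 1 (map_pmf Suc coinA) coinA"
    by (simp add: hs_map_inj sum_distrib_right)
  also have "\<dots> \<le> 1/2" using sum1 hs_coinA by simp
  finally show "hs 1 (map_pmf Suc (binomial_pmf (Suc m) (1/2))) (binomial_pmf (Suc m) (1/2)) \<le> 1/2" .
  have "hs 1 (binomial_pmf (Suc m) (1/2)) (map_pmf Suc (binomial_pmf (Suc m) (1/2)))
      \<le> (\<Sum>z\<in>set_pmf \<mu>. pmf \<mu> z * hs 1 (map_pmf ((+) z) coinA) (map_pmf ((+) z) (map_pmf Suc coinA)))"
    by (subst eq1, subst eq2, rule hs_mix[OF fm fc(1)]) simp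
  also have "\<dots> = (\<Sum>z\<in>set_pmf \<mu>. pmf \<mu> z) * hs 1 coinA (map_pmf Suc coinA)"
    by (simp add: hs_map_inj sum_distrib_right)
  also have "\<dots> \<le> 1/2" using sum1 hs_coinA by simp
  finally show "hs 1 (binomial_pmf (Suc m) (1/2)) (map_pmf Suc (binomial_pmf (Suc m) (1/2))) \<le> 1/2" .
qed

lemma RL0:
  fixes q a b x w \<epsilon> :: real
  assumes q: "0 \<le> q" "q \<le> 1/2" and a: "a = q \<or> a = 1 - q" and b: "b = q \<or> b = 1 - q"
    and xw: "0 < x" "0 < w"
    and c1: "(1 - 2*q) * (x - w) \<le> \<epsilon> * w" and c2: "(1 - 2*q) * (w - x) \<le> \<epsilon> * x"
    and eps: "0 \<le> \<epsilon>"
  shows "a * x + (1 - a) * w \<le> (1 + \<epsilon>) * (b * x + (1 - b) * w)"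
proof -
  define R where "R = b * x + (1 - b) * w"
  have Rpos: "0 \<le> R" using b q xw by (auto simp: R_def)
  have "a * x + (1 - a) * w - R \<le> \<epsilon> * R"
  proof (cases "a = b")
    case True
    then show ?thesis using Rpos eps by (simp add: R_def)
  next
    case False
    show ?thesis
    proof (cases "a = 1 - q")
      case True
      then have bq: "b = q" using False b by auto
      have d: "a * x + (1 - a) * w - R = (1 - 2*q) * (x - w)"
        by (simp add: R_def True bq algebra_simps)
      show ?thesis
      proof (cases "x \<le> w")
        case True
        have "(1 - 2*q) * (x - w) \<le> 0" using True q by (intro mult_nonneg_nonpos) auto
        then show ?thesis using d Rpos eps by (smt (verit) mult_nonneg_nonneg)
      next
        case False
        have "q * w \<le> q * x" using False q(1) by (intro mult_left_mono) auto
        then have "w \<le> R" unfolding R_def bq by (simp add: algebra_simps)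
        then have "\<epsilon> * w \<le> \<epsilon> * R" using eps by (rule mult_left_mono)
        then show ?thesis using d c1 by linarith
      qed
    next
      case False
      then have aq: "a = q" and bq: "b = 1 - q" using a b \<open>a \<noteq> b\<close> by auto
      have d: "a * x + (1 - a) * w - R = (1 - 2*q) * (w - x)"
        by (simp add: R_def aq bq algebra_simps)
      show ?thesis
      proof (cases "w \<le> x")
        case True
        have "(1 - 2*q) * (w - x) \<le> 0" using True q by (intro mult_nonneg_nonpos) auto
        then show ?thesis using d Rpos eps by (smt (verit) mult_nonneg_nonneg)
      next
        case False
        have "q * x \<le> q * w" using False q(1) by (intro mult_left_mono) auto
        then have "x \<le> R" unfolding R_def bq by (simp add: algebra_simps)
        then have "\<epsilon> * x \<le> \<epsilon> * R" using eps by (rule mult_left_mono)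
        then show ?thesis using d c2 by linarith
      qed
    qed
  qed
  then show ?thesis by (simp add: R_def algebra_simps)
qed

lemma RL:
  fixes q a b x w B0 B1 \<epsilon> :: real
  assumes q: "0 \<le> q" "q \<le> 1/2" and a: "a = q \<or> a = 1 - q" and b: "b = q \<or> b = 1 - q"
    and xw: "0 < x" "0 < w" and B: "B1 * w = B0 * x" "0 \<le> B0"
    and c1: "(1 - 2*q) * (x - w) \<le> \<epsilon> * w" and c2: "(1 - 2*q) * (w - x) \<le> \<epsilon> * x"
    and eps: "0 \<le> \<epsilon>"
  shows "a * B1 + (1 - a) * B0 \<le> exp \<epsilon> * (b * B1 + (1 - b) * B0)"
proof -
  have e: "1 + \<epsilon> \<le> exp \<epsilon>" by (rule exp_ge_add_one_self)
  have key: "a * x + (1 - a) * w \<le> exp \<epsilon> * (b * x + (1 - b) * w)"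
  proof -
    have pos: "0 \<le> b * x + (1 - b) * w" using b q xw by auto
    have "a * x + (1 - a) * w \<le> (1 + \<epsilon>) * (b * x + (1 - b) * w)"
      by (rule RL0[OF q a b xw c1 c2 eps])
    also have "\<dots> \<le> exp \<epsilon> * (b * x + (1 - b) * w)" using e pos by (rule mult_right_mono)
    finally show ?thesis .
  qed
  have "(a * B1 + (1 - a) * B0) * w = B0 * (a * x + (1 - a) * w)" using B by (simp add: algebra_simps)
  also have "\<dots> \<le> B0 * (exp \<epsilon> * (b * x + (1 - b) * w))" using key B(2) by (rule mult_left_mono)
  also have "\<dots> = (exp \<epsilon> * (b * B1 + (1 - b) * B0)) * w" using B by (simp add: algebra_simps)
  finally show ?thesis using xw by simp
qed

lemma pmf_binom_half:
  assumes "k \<le> m"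
  shows "pmf (binomial_pmf m (1/2)) k = real (m choose k) / 2 ^ m"
proof -
  have "(1/2::real) ^ k * (1/2) ^ (m - k) = (1/2) ^ m"
    using assms by (simp add: power_add[symmetric])
  then show ?thesis by (simp add: power_one_over)
qed

lemma choose_ratio_nat:
  assumes "1 \<le> s" "s \<le> m"
  shows "(m choose (s - 1)) * (m + 1 - s) = (m choose s) * s"
proof -
  have "s * (m choose s) = m * (m - 1 choose (s - 1))"
    using assms by (intro times_binomial_minus1_eq) auto
  moreover have "(m - (s - 1)) * (m choose (s - 1)) = m * (m - 1 choose (s - 1))"
    by (rule binomial_absorb_comp)
  moreover have "m - (s - 1) = m + 1 - s" using assms by auto
  ultimately show ?thesis by (simp add: mult.commute)
qed

lemma binom_ratio:
  assumes "1 \<le> s" "s \<le> m"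
  shows "pmf (binomial_pmf m (1/2)) (s - 1) * (real m + 1 - real s) = pmf (binomial_pmf m (1/2)) s * real s"
proof -
  have h1: "real (m choose (s - 1)) * real (m + 1 - s) = real (m choose s) * real s"
    using choose_ratio_nat[OF assms] by (metis of_nat_mult)
  have h2: "real (m + 1 - s) = real m + 1 - real s" using assms by auto
  have e1: "pmf (binomial_pmf m (1/2)) (s - 1) = real (m choose (s - 1)) / 2 ^ m"
    using assms by (intro pmf_binom_half) auto
  have e2: "pmf (binomial_pmf m (1/2)) s = real (m choose s) / 2 ^ m"
    using assms by (intro pmf_binom_half) auto
  show ?thesis unfolding e1 e2 using h1 unfolding h2
    by (simp add: field_simps)
qed

lemma hoeffding_half:
  assumes "0 < m" "0 \<le> u"
  shows "measure_pmf.prob (binomial_pmf m (1/2)) {k. u \<le> \<bar>real k - real m / 2\<bar>} \<le> 2 * exp (- 2 * u\<^sup>2 / real m)"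
proof -
  have bd: "binomial_distribution (1/2::real)" by (simp add: binomial_distribution_def)
  show ?thesis using binomial_distribution.prob_abs_ge[OF bd assms] by simp
qed

lemma hs_core_good:
  assumes Rx: "R x = bernoulli_pmf a" and Rx': "R x' = bernoulli_pmf b"
    and q: "0 \<le> q" "q \<le> 1/2" and a: "a = q \<or> a = 1 - q" and b: "b = q \<or> b = 1 - q"
    and eps: "0 \<le> \<epsilon>" and m: "0 < m" and t: "1/2 \<le> t" "4 * t \<le> real m + 1"
    and c: "(1 - 2*q) * t * 8 \<le> \<epsilon> * (real m + 1)"
  shows "hs (exp \<epsilon>) (core m R x) (core m R x') \<le> 2 * exp (- 2 * (t - 1/2)\<^sup>2 / real m)"
proof -
  define B where "B = binomial_pmf m (1/2)"
  define S where "S = map_pmf Suc B"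
  define U where "U = {..Suc m}"
  define Bad where "Bad = {s::nat. \<not> (1 \<le> s \<and> s \<le> m \<and> \<bar>2 * real s - (real m + 1)\<bar> \<le> 2 * t)}"
  define H where "H = measure_pmf.prob B {k. t - 1/2 \<le> \<bar>real k - real m / 2\<bar>}"
  have fU: "finite U" by (simp add: U_def)
  have a01: "0 \<le> a" "a \<le> 1" using a q by auto
  have b01: "0 \<le> b" "b \<le> 1" using b q by auto
  have P: "pmf (core m R x) s = a * pmf S s + (1 - a) * pmf B s" for s
    using pmf_core[of R x a m s] Rx a01 by (simp add: S_def B_def)
  have Q: "pmf (core m R x') s = b * pmf S s + (1 - b) * pmf B s" for s
    using pmf_core[of R x' b m s] Rx' b01 by (simp add: S_def B_def)
  have good: "pmf (core m R x) s \<le> exp \<epsilon> * pmf (core m R x') s" if s: "s \<notin> Bad" for s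
  proof -
    have s1: "1 \<le> s" "s \<le> m" and st: "\<bar>2 * real s - (real m + 1)\<bar> \<le> 2 * t"
      using s by (auto simp: Bad_def)
    define xx where "xx = real s"
    define ww where "ww = real m + 1 - real s"
    have xw: "0 < xx" "0 < ww" using s1 by (auto simp: xx_def ww_def)
    have d1: "1 - 2*q \<ge> 0" using q by simp
    have lw: "(real m + 1) / 4 \<le> ww" "(real m + 1) / 4 \<le> xx"
      using st t by (auto simp: ww_def xx_def abs_le_iff)
    have "(1 - 2*q) * (xx - ww) \<le> (1 - 2*q) * (2 * t)"
      using st d1 by (intro mult_left_mono) (auto simp: xx_def ww_def abs_le_iff)
    also have "\<dots> \<le> \<epsilon> * ((real m + 1) / 4)" using c by (simp add: algebra_simps)
    also have "\<dots> \<le> \<epsilon> * ww" using lw eps by (intro mult_left_mono) auto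
    finally have c1: "(1 - 2*q) * (xx - ww) \<le> \<epsilon> * ww" .
    have "(1 - 2*q) * (ww - xx) \<le> (1 - 2*q) * (2 * t)"
      using st d1 by (intro mult_left_mono) (auto simp: xx_def ww_def abs_le_iff)
    also have "\<dots> \<le> \<epsilon> * ((real m + 1) / 4)" using c by (simp add: algebra_simps)
    also have "\<dots> \<le> \<epsilon> * xx" using lw eps by (intro mult_left_mono) auto
    finally have c2: "(1 - 2*q) * (ww - xx) \<le> \<epsilon> * xx" .
    have Ss: "pmf S s = pmf B (s - 1)" using s1 by (simp add: S_def pmf_map_Suc)
    have rat: "pmf S s * ww = pmf B s * xx"
      unfolding Ss xx_def ww_def B_def by (rule binom_ratio[OF s1])
    show ?thesis unfolding P Q
      by (rule RL[OF q a b xw rat _ c1 c2 eps]) simp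
  qed
  have "hs (exp \<epsilon>) (core m R x) (core m R x') = (\<Sum>s\<in>U. max 0 (pmf (core m R x) s - exp \<epsilon> * pmf (core m R x') s))"
    by (intro hs_sum[OF fU]) (auto simp: U_def dest: set_core[THEN subsetD])
  also have "\<dots> \<le> (\<Sum>s\<in>U. if s \<in> Bad then pmf (core m R x) s else 0)"
  proof (intro sum_mono)
    fix s
    show "max 0 (pmf (core m R x) s - exp \<epsilon> * pmf (core m R x') s) \<le> (if s \<in> Bad then pmf (core m R x) s else 0)"
    proof (cases "s \<in> Bad")
      case True
      have "0 \<le> exp \<epsilon> * pmf (core m R x') s" by simp
      then show ?thesis using True by simp
    next
      case False
      then show ?thesis using good[OF False] by simp
    qed
  qed
  also have "\<dots> = (\<Sum>s\<in>U \<inter> Bad. pmf (core m R x) s)"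
    by (simp add: sum.inter_restrict[OF fU])
  also have "\<dots> = a * measure_pmf.prob S (U \<inter> Bad) + (1 - a) * measure_pmf.prob B (U \<inter> Bad)"
    using fU by (simp add: P sum.distrib sum_distrib_left measure_measure_pmf_finite)
  also have "\<dots> \<le> a * H + (1 - a) * H"
  proof (intro add_mono mult_left_mono)
    have "measure_pmf.prob S (U \<inter> Bad) = measure_pmf.prob B (Suc -` (U \<inter> Bad) \<inter> set_pmf B)"
      by (simp add: S_def measure_map_pmf measure_Int_set_pmf)
    also have "\<dots> \<le> H" unfolding H_def
    proof (rule measure_pmf.finite_measure_mono)
      show "Suc -` (U \<inter> Bad) \<inter> set_pmf B \<subseteq> {k. t - 1/2 \<le> \<bar>real k - real m / 2\<bar>}"
      proof
        fix k assume k: "k \<in> Suc -` (U \<inter> Bad) \<inter> set_pmf B"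
        then have km: "k \<le> m" by (simp add: B_def set_binomial_half)
        from k have "Suc k \<in> Bad" by simp
        then have "m < Suc k \<or> 2 * t < \<bar>2 * real (Suc k) - (real m + 1)\<bar>"
          by (auto simp: Bad_def)
        then show "k \<in> {k. t - 1/2 \<le> \<bar>real k - real m / 2\<bar>}"
          using km t by (auto simp: abs_if split: if_splits)
      qed
    qed simp
    finally show "measure_pmf.prob S (U \<inter> Bad) \<le> H" .
    have "measure_pmf.prob B (U \<inter> Bad) = measure_pmf.prob B ((U \<inter> Bad) \<inter> set_pmf B)"
      by (simp add: measure_Int_set_pmf)
    also have "\<dots> \<le> H" unfolding H_def
    proof (rule measure_pmf.finite_measure_mono)
      show "(U \<inter> Bad) \<inter> set_pmf B \<subseteq> {k. t - 1/2 \<le> \<bar>real k - real m / 2\<bar>}"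
      proof
        fix k assume k: "k \<in> (U \<inter> Bad) \<inter> set_pmf B"
        then have km: "k \<le> m" by (simp add: B_def set_binomial_half)
        from k have "k \<in> Bad" by simp
        then have "k = 0 \<or> 2 * t < \<bar>2 * real k - (real m + 1)\<bar>"
          using km by (auto simp: Bad_def)
        then show "k \<in> {k. t - 1/2 \<le> \<bar>real k - real m / 2\<bar>}"
          using km t by (auto simp: abs_if split: if_splits)
      qed
    qed simp
    finally show "measure_pmf.prob B (U \<inter> Bad) \<le> H" .
  qed (use a01 in auto)
  also have "\<dots> = H" by (simp add: algebra_simps)
  also have "\<dots> \<le> 2 * exp (- 2 * (t - 1/2)\<^sup>2 / real m)"
    unfolding H_def B_def using m t by (intro hoeffding_half) auto
  finally show ?thesis .
qed

lemma chernoff_low: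
  fixes p :: real
  assumes p: "0 \<le> p" "p \<le> 1"
  shows "measure_pmf.prob (binomial_pmf N p) {k. real k \<le> real N * p / 4} \<le> exp (- (real N * p / 4))"
proof -
  define B where "B = binomial_pmf N p"
  define a where "a = real N * p / 4"
  define A where "A = {k. real k \<le> a}"
  have a0: "0 \<le> a" using p by (simp add: a_def)
  have sB: "set_pmf B \<subseteq> {..N}" using p by (auto simp: B_def set_pmf_binomial_eq split: if_splits)
  have "measure_pmf.prob B A = measure_pmf.prob B (A \<inter> set_pmf B)" by (simp add: measure_Int_set_pmf)
  also have "\<dots> \<le> measure_pmf.prob B ({..N} \<inter> A)"
    using sB by (intro measure_pmf.finite_measure_mono) auto
  also have "\<dots> = (\<Sum>k\<in>{..N} \<inter> A. pmf B k)" by (simp add: measure_measure_pmf_finite)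
  also have "\<dots> = (\<Sum>k\<le>N. if k \<in> A then pmf B k else 0)"
    by (simp add: sum.inter_restrict)
  also have "\<dots> \<le> (\<Sum>k\<le>N. pmf B k * (2 powr a * (1/2) ^ k))"
  proof (intro sum_mono)
    fix k
    show "(if k \<in> A then pmf B k else 0) \<le> pmf B k * (2 powr a * (1/2) ^ k)"
    proof (cases "k \<in> A")
      case True
      then have "real k \<le> a" by (simp add: A_def)
      then have "2 powr real k \<le> 2 powr a" by simp
      then have "2 ^ k \<le> 2 powr a" by (simp add: powr_realpow)
      then have "1 \<le> 2 powr a * (1/2) ^ k" by (simp add: field_simps)
      then show ?thesis using True mult_left_mono[of 1 _ "pmf B k"] by simp
    qed simp
  qed
  also have "\<dots> = 2 powr a * (\<Sum>k\<le>N. real (N choose k) * (p/2) ^ k * (1 - p) ^ (N - k))"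
    using p by (simp add: B_def sum_distrib_left algebra_simps power_mult_distrib power_divide)
  also have "(\<Sum>k\<le>N. real (N choose k) * (p/2) ^ k * (1 - p) ^ (N - k)) = (p/2 + (1 - p)) ^ N"
    by (subst binomial_ring) (simp add: atLeast0AtMost)
  also have "(p/2 + (1 - p)) ^ N \<le> exp (- p/2) ^ N"
  proof (rule power_mono)
    show "p/2 + (1 - p) \<le> exp (- p/2)" using exp_ge_add_one_self[of "- p/2"] by simp
  qed (use p in simp)
  also have "exp (- p/2) ^ N = exp (- (real N * p / 2))" by (simp add: exp_of_nat_mult[symmetric])
  also have "2 powr a * exp (- (real N * p / 2)) \<le> exp a * exp (- (real N * p / 2))"
  proof (rule mult_right_mono)
    have "2 powr a = exp (a * ln 2)" by (simp add: powr_def)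
    also have "\<dots> \<le> exp a" using a0 ln_2_less_1 by (simp add: mult_left_le)
    finally show "2 powr a \<le> exp a" .
  qed simp
  also have "exp a * exp (- (real N * p / 2)) = exp (- (real N * p / 4))"
    by (simp add: a_def exp_add[symmetric])
  finally show ?thesis by (simp add: A_def a_def B_def)
qed

lemma good_params:
  fixes k L p \<epsilon> :: real
  assumes k: "2048 * L * (1 - p)^2 / \<epsilon>^2 + 8 * (1 - p) / \<epsilon> + 512 * L + 2 \<le> k"
    and L: "0 \<le> L" and p: "0 \<le> 1 - p" and eps: "0 < \<epsilon>"
  shows "4 * (1/2 + sqrt (8 * k * L)) \<le> k + 1"
    and "(1 - p) * (1/2 + sqrt (8 * k * L)) * 8 \<le> \<epsilon> * (k + 1)"
proof -
  define s where "s = sqrt (8 * k * L)"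
  have t1: "0 \<le> 2048 * L * (1 - p)^2 / \<epsilon>^2" "0 \<le> 8 * (1 - p) / \<epsilon>"
    using L p eps by auto
  have k2: "2 \<le> k" "512 * L \<le> k" using k t1 L by linarith+
  have "0 \<le> 8 * k * L" using k2 L by (intro mult_nonneg_nonneg) auto
  then have ss: "s^2 = 8 * k * L" by (simp add: s_def)
  have "s^2 \<le> (k/8)^2"
  proof -
    have "k * (512 * L) \<le> k * k" using k2 by (intro mult_left_mono) auto
    moreover have "8 * k * L * 64 = k * (512 * L)" by simp
    ultimately have "8 * k * L * 64 \<le> k * k" by simp
    moreover have "(k/8)^2 = k * k / 64" by (simp add: power2_eq_square)
    ultimately show ?thesis unfolding ss by simp
  qed
  then have sk: "s \<le> k/8" by (rule power2_le_imp_le) (use k2 in simp)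
  have sq: "sqrt (8 * k * L) = s" by (simp add: s_def)
  show "4 * (1/2 + sqrt (8 * k * L)) \<le> k + 1" unfolding sq
  proof -
    have "4 * (1/2 + s) = 2 + 4 * s" by (simp add: algebra_simps)
    then show "4 * (1/2 + s) \<le> k + 1" using sk k2 by linarith
  qed
  have a1: "8 * (1 - p) / \<epsilon> \<le> k" using k t1 L by linarith
  then have "8 * (1 - p) \<le> k * \<epsilon>" using eps by (simp add: pos_divide_le_eq)
  then have A: "(1 - p) * 4 \<le> \<epsilon> * k / 2" by (simp add: mult.commute)
  have a2: "2048 * L * (1 - p)^2 / \<epsilon>^2 \<le> k" using k t1 L by linarith
  then have a2': "2048 * L * (1 - p)^2 \<le> k * \<epsilon>^2" using eps by (simp add: pos_divide_le_eq)
  have "(16 * (1 - p) * s)^2 \<le> (\<epsilon> * k)^2"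
  proof -
    have "(16 * (1 - p) * s)^2 = 256 * (1 - p)^2 * s^2"
      unfolding power_mult_distrib by simp
    also have "\<dots> = k * (2048 * L * (1 - p)^2)" unfolding ss by (simp add: algebra_simps)
    also have "\<dots> \<le> k * (k * \<epsilon>^2)" using a2' k2 by (intro mult_left_mono) auto
    also have "\<dots> = (\<epsilon> * k)^2" by (simp add: power2_eq_square algebra_simps)
    finally show ?thesis .
  qed
  then have B: "16 * (1 - p) * s \<le> \<epsilon> * k" by (rule power2_le_imp_le) (use eps k2 in simp)
  have "(1 - p) * (1/2 + s) * 8 = (1 - p) * 4 + (16 * (1 - p) * s) / 2" by (simp add: field_simps)
  also have "\<dots> \<le> \<epsilon> * k / 2 + \<epsilon> * k / 2" using A B by linarith
  also have "\<dots> \<le> \<epsilon> * (k + 1)" using eps by (simp add: algebra_simps)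
  finally show "(1 - p) * (1/2 + sqrt (8 * k * L)) * 8 \<le> \<epsilon> * (k + 1)" unfolding sq .
qed

lemma exp_neg_ln:
  fixes \<delta> :: real
  assumes "0 < \<delta>" shows "exp (- ln (1 / \<delta>)) = \<delta>"
proof -
  have "ln (1 / \<delta>) = - ln \<delta>" using assms ln_inverse[of \<delta>] by (simp add: inverse_eq_divide)
  then show ?thesis using assms by simp
qed

lemma regimeI_sum:
  fixes a b p q \<epsilon> \<delta> L :: real and N :: nat
  assumes Rx: "R x = bernoulli_pmf a" and Rx': "R x' = bernoulli_pmf b"
    and q: "q = p / 2" and p: "0 \<le> p" "p \<le> 1"
    and a: "a = q \<or> a = 1 - q" and b: "b = q \<or> b = 1 - q"
    and eps: "0 < \<epsilon>" and del: "0 < \<delta>" and L: "L = ln (1 / \<delta>)" "1/4 \<le> L"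
    and M0: "2048 * L * (1 - p)^2 / \<epsilon>^2 + 8 * (1 - p) / \<epsilon> + 512 * L + 2 \<le> real N * p / 4"
    and NL: "5 * L \<le> real N * p / 4"
  shows "(\<Sum>k\<le>N. pmf (binomial_pmf N p) k * hs (exp \<epsilon>) (core k R x) (core k R x')) \<le> \<delta>"
proof -
  define B where "B = binomial_pmf N p"
  define A where "A = {k::nat. real k \<le> real N * p / 4}"
  have dL: "\<delta> = exp (- L)" using exp_neg_ln[OF del] L by simp
  have hk: "hs (exp \<epsilon>) (core k R x) (core k R x') \<le> (if k \<in> A then 1 else \<delta> / 2)" for k
  proof (cases "k \<in> A")
    case True
    then show ?thesis using hs_le_1[of "exp \<epsilon>"] by simp
  next
    case False
    then have "real N * p / 4 < real k" by (simp add: A_def)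
    then have kM: "2048 * L * (1 - p)^2 / \<epsilon>^2 + 8 * (1 - p) / \<epsilon> + 512 * L + 2 \<le> real k"
      using M0 by linarith
    have L0: "0 \<le> L" using L by simp
    have p1: "0 \<le> 1 - p" using p by simp
    note gp = good_params[OF kM L0 p1 eps]
    have k0: "0 < k"
    proof -
      have "0 \<le> 2048 * L * (1 - p)^2 / \<epsilon>^2" "0 \<le> 8 * (1 - p) / \<epsilon>" using L0 p1 eps by auto
      then show ?thesis using kM L0 by linarith
    qed
    define t where "t = 1/2 + sqrt (8 * real k * L)"
    have q0: "0 \<le> q" "q \<le> 1/2" using q p by auto
    have c: "(1 - 2*q) * t * 8 \<le> \<epsilon> * (real k + 1)" using gp(2) by (simp add: q t_def)
    have "hs (exp \<epsilon>) (core k R x) (core k R x') \<le> 2 * exp (- 2 * (t - 1/2)\<^sup>2 / real k)"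
    proof (rule hs_core_good[OF Rx Rx' q0 a b _ k0])
      have "0 \<le> 8 * real k * L" using L0 by simp
      then show "1/2 \<le> t" by (simp add: t_def)
    qed (use eps gp(1) c in \<open>auto simp: t_def\<close>)
    also have "(t - 1/2)\<^sup>2 = 8 * real k * L" using L0 by (simp add: t_def)
    also have "- 2 * (8 * real k * L) / real k = - 16 * L" using k0 by simp
    also have "2 * exp (- 16 * L) \<le> \<delta> / 2"
    proof -
      have "4 \<le> exp (15 * L)" using exp_ge_add_one_self[of "15 * L"] L by linarith
      then have "4 * exp (- 16 * L) \<le> exp (15 * L) * exp (- 16 * L)" by (intro mult_right_mono) auto
      also have "\<dots> = exp (- L)" by (simp add: exp_add[symmetric])
      finally show ?thesis using dL by simp
    qed
    finally show ?thesis using False by simp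
  qed
  have "(\<Sum>k\<le>N. pmf B k * hs (exp \<epsilon>) (core k R x) (core k R x'))
      \<le> (\<Sum>k\<le>N. pmf B k * ((if k \<in> A then 1 else 0) + \<delta> / 2))"
  proof (intro sum_mono mult_left_mono)
    fix k show "hs (exp \<epsilon>) (core k R x) (core k R x') \<le> (if k \<in> A then 1 else 0) + \<delta> / 2"
      using hk[of k] del by (auto split: if_splits)
  qed simp
  also have "\<dots> = (\<Sum>k\<in>{..N} \<inter> A. pmf B k) + \<delta> / 2 * (\<Sum>k\<le>N. pmf B k)"
  proof -
    have "pmf B k * ((if k \<in> A then 1 else 0) + \<delta> / 2) = (if k \<in> A then pmf B k else 0) + \<delta> / 2 * pmf B k" for k
      by (simp add: algebra_simps)
    then show ?thesis by (simp add: sum.distrib sum_distrib_left sum.inter_restrict)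
  qed
  also have "(\<Sum>k\<le>N. pmf B k) = 1"
    using p by (intro sum_pmf_eq_1) (auto simp: B_def set_pmf_binomial_eq)
  also have "(\<Sum>k\<in>{..N} \<inter> A. pmf B k) = measure_pmf.prob B ({..N} \<inter> A)"
    by (simp add: measure_measure_pmf_finite)
  also have "\<dots> \<le> measure_pmf.prob B A" by (intro measure_pmf.finite_measure_mono) auto
  also have "\<dots> \<le> exp (- (real N * p / 4))" unfolding B_def A_def by (rule chernoff_low[OF p])
  also have "\<dots> \<le> exp (- 5 * L)" using NL by simp
  also have "exp (- 5 * L) \<le> \<delta> / 2"
  proof -
    have "2 \<le> exp (4 * L)" using exp_ge_add_one_self[of "4 * L"] L by linarith
    then have "2 * exp (- 5 * L) \<le> exp (4 * L) * exp (- 5 * L)" by (intro mult_right_mono) auto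
    also have "\<dots> = exp (- L)" by (simp add: exp_add[symmetric])
    finally show ?thesis using dL by simp
  qed
  finally show ?thesis by (simp add: B_def)
qed

lemma regimeII_sum:
  fixes a b p q \<epsilon> :: real and N :: nat
  assumes Rx: "R x = bernoulli_pmf a" and Rx': "R x' = bernoulli_pmf b"
    and q: "q = p / 2" and p: "0 \<le> p" "p \<le> 1"
    and a: "a = q \<or> a = 1 - q" and b: "b = q \<or> b = 1 - q"
    and eps: "0 \<le> \<epsilon>"
  shows "(\<Sum>k\<le>N. pmf (binomial_pmf N p) k * hs (exp \<epsilon>) (core k R x) (core k R x'))
          \<le> (1 + (1 - p) ^ Suc N) / 2"
proof -
  define B where "B = binomial_pmf N p"
  have ab: "\<bar>a - b\<bar> \<le> 1 - p" using a b q p by auto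
  have a01: "0 \<le> a" "a \<le> 1" "0 \<le> b" "b \<le> 1" using a b q p by auto
  have e1: "1 \<le> exp \<epsilon>" using eps by simp
  have hk: "hs (exp \<epsilon>) (core k R x) (core k R x') \<le> (1 - p) / 2 + (if k = 0 then (1 - p) / 2 else 0)" for k
  proof -
    define M where "M = max (hs 1 (map_pmf Suc (binomial_pmf k (1/2))) (binomial_pmf k (1/2)))
                      (hs 1 (binomial_pmf k (1/2)) (map_pmf Suc (binomial_pmf k (1/2))))"
    have M0: "0 \<le> M" by (simp add: M_def hs_nonneg le_max_iff_disj)
    have M1: "M \<le> (if k = 0 then 1 else 1/2)"
    proof (cases k)
      case 0
      have "hs 1 (map_pmf Suc (binomial_pmf k (1/2))) (binomial_pmf k (1/2)) \<le> 1"
           "hs 1 (binomial_pmf k (1/2)) (map_pmf Suc (binomial_pmf k (1/2))) \<le> 1"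
        by (rule hs_le_1, simp)+
      then show ?thesis using 0 by (simp add: M_def)
    next
      case (Suc k')
      then show ?thesis using hs_binomial_shift[of k'] by (simp add: M_def)
    qed
    have "hs (exp \<epsilon>) (core k R x) (core k R x') \<le> \<bar>a - b\<bar> * M"
      unfolding M_def by (rule hs_core_tv[OF Rx Rx' a01 e1])
    also have "\<dots> \<le> (1 - p) * (if k = 0 then 1 else 1/2)"
      using ab M0 M1 by (intro mult_mono) auto
    finally show ?thesis by (auto split: if_splits)
  qed
  have "(\<Sum>k\<le>N. pmf B k * hs (exp \<epsilon>) (core k R x) (core k R x'))
      \<le> (\<Sum>k\<le>N. pmf B k * ((1 - p) / 2 + (if k = 0 then (1 - p) / 2 else 0)))"
    by (intro sum_mono mult_left_mono hk) simp
  also have "\<dots> = (1 - p) / 2 * (\<Sum>k\<le>N. pmf B k) + (1 - p) / 2 * pmf B 0"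
  proof -
    have "pmf B k * ((1 - p) / 2 + (if k = 0 then (1 - p) / 2 else 0)) =
          (1 - p) / 2 * pmf B k + (if k = 0 then (1 - p) / 2 * pmf B 0 else 0)" for k
      by (simp add: algebra_simps)
    then show ?thesis by (simp add: sum.distrib sum_distrib_left)
  qed
  also have "(\<Sum>k\<le>N. pmf B k) = 1"
    using p by (intro sum_pmf_eq_1) (auto simp: B_def set_pmf_binomial_eq)
  also have "pmf B 0 = (1 - p) ^ N" using p by (simp add: B_def)
  also have "(1 - p) / 2 * 1 + (1 - p) / 2 * (1 - p) ^ N \<le> (1 + (1 - p) ^ Suc N) / 2"
    using p by simp
  finally show ?thesis by (simp add: B_def)
qed

lemma neighboring_split:
  assumes "neighboring X X'" "length X = n" "1 \<le> n"
  obtains j where "j < n" "X = take j X @ X ! j # drop (Suc j) X"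
    "X' = take j X @ X' ! j # drop (Suc j) X"
proof -
  have len: "length X' = n" using assms by (simp add: neighboring_def)
  define D where "D = {i. i < length X \<and> X ! i \<noteq> X' ! i}"
  have cD: "card D \<le> 1" using assms(1) unfolding neighboring_def D_def by linarith
  have fD: "finite D" by (simp add: D_def)
  obtain j where j: "j < n" and oth: "\<And>i. i < n \<Longrightarrow> i \<noteq> j \<Longrightarrow> X ! i = X' ! i"
  proof (cases "D = {}")
    case True
    then show ?thesis using that[of 0] assms by (auto simp: D_def)
  next
    case False
    then have "card D = 1" using cD fD by (simp add: Suc_leI card_gt_0_iff le_antisym)
    then obtain j where "D = {j}" by (rule card_1_singletonE)
    then show ?thesis using that[of j] assms by (auto simp: D_def)
  qed
  have tk: "take j X' = take j X"
    using oth j len assms(2) by (intro nth_equalityI) auto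
  have dr: "drop (Suc j) X' = drop (Suc j) X"
    using oth j len assms(2) by (intro nth_equalityI) auto
  have "X = take j X @ X ! j # drop (Suc j) X" using j assms(2) by (simp add: id_take_nth_drop)
  moreover have "X' = take j X @ X' ! j # drop (Suc j) X"
    using id_take_nth_drop[of j X'] j len tk dr by simp
  ultimately show ?thesis using that j by blast
qed

lemma dp_of_sum_bound:
  assumes n: "1 \<le> n" and p: "p = lam / real n" "0 \<le> p" "p \<le> 1" and eps: "0 \<le> \<epsilon>"
    and H: "\<And>x x'. (\<Sum>k\<le>n - 1. pmf (binomial_pmf (n - 1) p) k *
              hs (exp \<epsilon>) (core k (bitsum_encoder n lam) x) (core k (bitsum_encoder n lam) x')) \<le> \<delta>"
  shows "bitsum_shuffled_dp n lam \<epsilon> \<delta>"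
  unfolding bitsum_shuffled_dp_def diff_private_def
proof (intro allI impI)
  fix X X' :: "bool list" and T
  assume lX: "length X = n" and nb: "neighboring X X'"
  define R where "R = bitsum_encoder n lam"
  obtain j where j: "j < n" "X = take j X @ X ! j # drop (Suc j) X"
      "X' = take j X @ X' ! j # drop (Suc j) X"
    using neighboring_split[OF nb lX n] by blast
  have lX': "length X' = length X" using nb by (simp add: neighboring_def)
  have lens: "length (take j X) + length (drop (Suc j) X) = n - 1" using j lX by simp
  have "measure_pmf.prob (shuffled_view R X) T
     \<le> exp \<epsilon> * measure_pmf.prob (shuffled_view R X') T + hs (exp \<epsilon>) (cntd R X) (cntd R X')"
    by (rule dp_from_hs[OF _ lX']) simp
  also have "hs (exp \<epsilon>) (cntd R X) (cntd R X') \<le> \<delta>"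
  proof -
    have "hs (exp \<epsilon>) (cntd R X) (cntd R X') \<le>
      (\<Sum>k\<le>length (take j X) + length (drop (Suc j) X). pmf (binomial_pmf (length (take j X) + length (drop (Suc j) X)) p) k *
          hs (exp \<epsilon>) (core k R (X ! j)) (core k R (X' ! j)))"
      unfolding R_def by (subst j(2), subst j(3), rule hs_cntd[OF p]) simp
    also have "\<dots> \<le> \<delta>" unfolding lens R_def by (rule H)
    finally show ?thesis .
  qed
  finally show "measure_pmf.prob (shuffled_view (bitsum_encoder n lam) X) T
     \<le> exp \<epsilon> * measure_pmf.prob (shuffled_view (bitsum_encoder n lam) X') T + \<delta>"
    by (simp add: R_def)
qed

lemma small_L_ineq:
  fixes L :: real
  assumes "0 \<le> L" "L < 1/4"
  shows "(1 + exp (- (4 * L))) / 2 \<le> exp (- L)"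
proof -
  define y where "y = exp (- L)"
  have y1: "y \<le> 1" using assms by (simp add: y_def)
  have y0: "3/4 \<le> y" using exp_ge_add_one_self[of "- L"] assms by (simp add: y_def)
  have y4: "exp (- (4 * L)) = y ^ 4" by (simp add: y_def exp_of_nat_mult[symmetric])
  have f: "0 \<le> y^3 + y^2 + y - 1"
  proof -
    have h3: "(3/4::real)^3 \<le> y^3" and h2: "(3/4::real)^2 \<le> y^2" using y0 by (intro power_mono; simp)+
    have "(3/4::real)^3 = 27/64" "(3/4::real)^2 = 9/16" by (simp_all add: power3_eq_cube power2_eq_square)
    then show ?thesis using h3 h2 y0 by linarith
  qed
  have "0 \<le> (1 - y) * (y^3 + y^2 + y - 1)" using y1 f by simp
  then have "1 + y^4 \<le> 2 * y" by (simp add: algebra_simps power2_eq_square power3_eq_cube power4_eq_xxxx)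
  then show ?thesis using y4 by (simp add: y_def)
qed

lemma dp_final:
  fixes \<delta> \<epsilon> lam L :: real and n :: nat
  assumes n: "1 \<le> n" and del: "0 < \<delta>" "\<delta> < 1" and L: "L = ln (1 / \<delta>)"
    and lam: "0 < lam" "lam < real n" and p: "p = lam / real n" and eps: "0 < \<epsilon>"
    and RI: "1/4 \<le> L \<Longrightarrow> 2048 * L * (1 - p)^2 / \<epsilon>^2 + 8 * (1 - p) / \<epsilon> + 512 * L + 2 \<le> real (n - 1) * p / 4
                          \<and> 5 * L \<le> real (n - 1) * p / 4"
    and RII: "4 * L \<le> lam"
  shows "bitsum_shuffled_dp n lam \<epsilon> \<delta>"
proof -
  have p01: "0 \<le> p" "p \<le> 1" using lam p by auto
  have L0: "0 \<le> L" using L del by simp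
  have dL: "\<delta> = exp (- L)" using exp_neg_ln[OF del(1)] L by simp
  define q where "q = p / 2"
  show ?thesis
  proof (rule dp_of_sum_bound[OF n p p01 less_imp_le[OF eps]])
    fix x x' :: bool
    define R where "R = bitsum_encoder n lam"
    define a where "a = (if x then 1 - p/2 else p/2)"
    define b where "b = (if x' then 1 - p/2 else p/2)"
    have Rx: "R x = bernoulli_pmf a" unfolding R_def a_def by (rule encoder_bernoulli[OF p p01])
    have Rx': "R x' = bernoulli_pmf b" unfolding R_def b_def by (rule encoder_bernoulli[OF p p01])
    have a: "a = q \<or> a = 1 - q" and b: "b = q \<or> b = 1 - q" by (auto simp: a_def b_def q_def)
    show "(\<Sum>k\<le>n - 1. pmf (binomial_pmf (n - 1) p) k * hs (exp \<epsilon>) (core k R x) (core k R x')) \<le> \<delta>"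
    proof (cases "1/4 \<le> L")
      case True
      show ?thesis
        using RI[OF True] by (intro regimeI_sum[OF Rx Rx' q_def p01 a b eps del(1) L True]) auto
    next
      case False
      have "(\<Sum>k\<le>n - 1. pmf (binomial_pmf (n - 1) p) k * hs (exp \<epsilon>) (core k R x) (core k R x'))
          \<le> (1 + (1 - p) ^ Suc (n - 1)) / 2"
        by (rule regimeII_sum[OF Rx Rx' q_def p01 a b less_imp_le[OF eps]])
      also have "Suc (n - 1) = n" using n by simp
      also have "(1 - p) ^ n \<le> exp (- p) ^ n"
        using p01 exp_ge_add_one_self[of "- p"] by (intro power_mono) auto
      also have "exp (- p) ^ n = exp (- lam)"
        using lam n by (simp add: p exp_of_nat_mult[symmetric])
      also have "exp (- lam) \<le> exp (- (4 * L))" using RII by simp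
      also have "(1 + exp (- (4 * L))) / 2 \<le> exp (- L)" using False L0 by (intro small_L_ineq) auto
      finally show ?thesis using dL by simp
    qed
  qed
qed

lemma branch1_arith:
  fixes n :: nat and L \<epsilon> lam p :: real
  assumes n: "1 \<le> n" and L: "0 < L" and e1: "20000 * L \<le> \<epsilon> * real n" and eps: "0 < \<epsilon>" "\<epsilon> \<le> 1"
    and e2: "41600 * L \<le> \<epsilon>^2 * real n" and lam: "lam = 20800 * L / \<epsilon>^2" and p: "p = lam / real n"
  shows "0 < lam" "lam < real n" "4 * L \<le> lam"
    "1/4 \<le> L \<Longrightarrow> 2048 * L * (1 - p)^2 / \<epsilon>^2 + 8 * (1 - p) / \<epsilon> + 512 * L + 2 \<le> real (n - 1) * p / 4
                          \<and> 5 * L \<le> real (n - 1) * p / 4"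
proof -
  define u where "u = 1 / \<epsilon>^2"
  have e2pos: "0 < \<epsilon>^2" using eps by simp
  have e21: "\<epsilon>^2 \<le> 1" using eps by (simp add: power_le_one)
  have u1: "1 \<le> u" using e2pos e21 by (simp add: u_def)
  have lamu: "lam = 20800 * L * u" by (simp add: lam u_def)
  show lpos: "0 < lam" using L u1 lamu by simp
  have n0: "0 < real n" using n by simp
  have "lam * \<epsilon>^2 = 20800 * L" using e2pos by (simp add: lam)
  then have "2 * (lam * \<epsilon>^2) \<le> \<epsilon>^2 * real n" using e2 by simp
  then have "2 * lam \<le> real n" using e2pos by (simp add: algebra_simps)
  then have lamn: "lam \<le> real n / 2" by simp
  then show "lam < real n" using n0 by simp
  show "4 * L \<le> lam" using lamu u1 L by (simp add: mult_left_mono[of 1 u "20800 * L", simplified])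
  assume L4: "1/4 \<le> L"
  have nL: "20000 * L \<le> real n" using e1 eps n0 mult_right_mono[of \<epsilon> 1 "real n"] by linarith
  have n2: "2 \<le> n" using nL L4 by linarith
  have p0: "0 \<le> p" "p \<le> 1" using lpos lamn n0 by (auto simp: p)
  have Np: "lam / 2 \<le> real (n - 1) * p"
  proof -
    have "real (n - 1) = real n - 1" using n by simp
    then have "real (n - 1) * p = lam - p" using n0 by (simp add: p field_simps)
    moreover have "p \<le> lam / 2" using lpos n2 by (simp add: p field_simps)
    ultimately show ?thesis by simp
  qed
  have ie: "1 / \<epsilon> \<le> u"
  proof -
    have "\<epsilon>^2 \<le> \<epsilon>" using eps by (simp add: power2_eq_square mult_left_le)
    then show ?thesis unfolding u_def using eps by (simp add: frac_le)
  qed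
  have t1: "2048 * L * (1 - p)^2 / \<epsilon>^2 \<le> 2048 * L * u"
  proof -
    have "(1 - p)^2 \<le> 1" using p0 by (simp add: power_le_one)
    then show ?thesis unfolding u_def using L e2pos by (simp add: divide_right_mono mult_left_le)
  qed
  have t2: "8 * (1 - p) / \<epsilon> \<le> 32 * L * u"
  proof -
    have "8 * (1 - p) / \<epsilon> \<le> 8 * (1 / \<epsilon>)" using p0 eps by (simp add: divide_right_mono)
    also have "\<dots> \<le> 8 * u" using ie by simp
    also have "\<dots> \<le> 32 * L * u" using L4 u1 mult_right_mono[of 1 "4 * L" u] by simp
    finally show ?thesis .
  qed
  have t3: "512 * L \<le> 512 * L * u" using u1 L mult_left_mono[of 1 u "512 * L"] by simp
  have t4: "2 \<le> 8 * L * u" using u1 L4 mult_mono[of 1 "4 * L" 1 u] by simp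
  have "2048 * L * (1 - p)^2 / \<epsilon>^2 + 8 * (1 - p) / \<epsilon> + 512 * L + 2 \<le> 2600 * L * u"
    using t1 t2 t3 t4 by linarith
  also have "\<dots> = lam / 8" by (simp add: lamu)
  also have "\<dots> \<le> real (n - 1) * p / 4" using Np by simp
  finally have M: "2048 * L * (1 - p)^2 / \<epsilon>^2 + 8 * (1 - p) / \<epsilon> + 512 * L + 2 \<le> real (n - 1) * p / 4" .
  have "L \<le> L * u" using u1 L mult_left_mono[of 1 u L] by simp
  moreover have "lam = 20800 * (L * u)" by (simp add: lamu)
  ultimately have "5 * L \<le> real (n - 1) * p / 4" using Np L by linarith
  then show "2048 * L * (1 - p)^2 / \<epsilon>^2 + 8 * (1 - p) / \<epsilon> + 512 * L + 2 \<le> real (n - 1) * p / 4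
                          \<and> 5 * L \<le> real (n - 1) * p / 4" using M by simp
qed

lemma branch2_arith:
  fixes n :: nat and L \<epsilon> lam p :: real
  assumes n: "1 \<le> n" and L: "0 < L" and e1: "20000 * L \<le> \<epsilon> * real n" and eps: "0 < \<epsilon>" "\<epsilon> \<le> 1"
    and e2: "\<epsilon> < sqrt (41600 * L / real n)"
    and lam: "lam = real n - 1/1000 * \<epsilon> * real n powr (3/2) / sqrt L" and p: "p = lam / real n"
  shows "0 < lam" "lam < real n" "4 * L \<le> lam"
    "1/4 \<le> L \<Longrightarrow> 2048 * L * (1 - p)^2 / \<epsilon>^2 + 8 * (1 - p) / \<epsilon> + 512 * L + 2 \<le> real (n - 1) * p / 4
                          \<and> 5 * L \<le> real (n - 1) * p / 4"
proof -
  have n0: "0 < real n" using n by simp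
  define c where "c = \<epsilon> * sqrt (real n) / (1000 * sqrt L)"
  have sL: "0 < sqrt L" using L by simp
  have sn: "0 < sqrt (real n)" using n0 by simp
  have c0: "0 < c" using eps sL sn by (simp add: c_def)
  have pw: "real n powr (3/2) = real n * sqrt (real n)"
  proof -
    have "real n powr (3/2) = real n powr (1 + 1/2)" by simp
    also have "\<dots> = real n powr 1 * real n powr (1/2)" by (rule powr_add)
    also have "\<dots> = real n * sqrt (real n)" using n0 by (simp add: powr_half_sqrt)
    finally show ?thesis .
  qed
  have lamc: "lam = real n * (1 - c)" unfolding lam pw c_def using sL by (simp add: field_simps)
  have pc: "p = 1 - c" using n0 by (simp add: p lamc)
  have c2: "c^2 = \<epsilon>^2 * real n / (1000000 * L)"
    unfolding c_def using L n0 by (simp add: power_divide power_mult_distrib)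
  have ee: "\<epsilon>^2 < 41600 * L / real n"
  proof -
    have "\<epsilon>^2 < (sqrt (41600 * L / real n))^2" using e2 eps by (intro power_strict_mono) auto
    also have "\<dots> = 41600 * L / real n" using L n0 by simp
    finally show ?thesis .
  qed
  then have "\<epsilon>^2 * real n < 41600 * L" using n0 by (simp add: field_simps)
  then have "c^2 < (21/100)^2" unfolding c2 using L by (simp add: field_simps power2_eq_square)
  then have c21: "c < 21/100" by (rule power_less_imp_less_base) simp
  have nL: "20000 * L \<le> real n" using e1 eps n0 mult_right_mono[of \<epsilon> 1 "real n"] by linarith
  have "c * real n \<le> 1/2 * real n" using c21 n0 by (intro mult_right_mono) auto
  then have lamn2: "real n / 2 \<le> lam" by (simp add: lamc algebra_simps)
  show "0 < lam" using lamn2 n0 by simp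
  show "lam < real n" using c0 n0 by (simp add: lamc)
  show "4 * L \<le> lam" using lamn2 nL L by linarith
  assume L4: "1/4 \<le> L"
  have n2: "2 \<le> n" using nL L4 by linarith
  have Np: "real n / 16 \<le> real (n - 1) * p / 4"
  proof -
    have "real n / 2 \<le> real (n - 1)" using n2 by simp
    moreover have "1/2 \<le> p" using c21 pc by simp
    ultimately have "real n / 2 * (1/2) \<le> real (n - 1) * p" by (intro mult_mono) auto
    then show ?thesis by simp
  qed
  have t1: "2048 * L * (1 - p)^2 / \<epsilon>^2 = 2048 / 1000000 * real n"
    unfolding pc using c2 L eps by (simp add: field_simps)
  have t2: "8 * (1 - p) / \<epsilon> \<le> 16 / 1000 * real n"
  proof -
    have "8 * (1 - p) / \<epsilon> = 8 / 1000 * (sqrt (real n) / sqrt L)"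
      unfolding pc c_def using eps by (simp add: field_simps)
    also have "\<dots> \<le> 8 / 1000 * (real n * 2)"
    proof (intro mult_left_mono)
      have "real n \<le> (real n)^2" using n by (simp add: power2_eq_square)
      then have "sqrt (real n) \<le> real n" by (intro real_le_lsqrt) auto
      moreover have "1/2 \<le> sqrt L" using L4 by (intro real_le_rsqrt) (simp add: power2_eq_square)
      moreover have "real n * 1 \<le> real n * (sqrt L * 2)" using calculation(2) n0 by (intro mult_left_mono) auto
      ultimately have A: "sqrt (real n) \<le> real n * 2 * sqrt L" by linarith
      show "sqrt (real n) / sqrt L \<le> real n * 2" using A sL by (simp add: pos_divide_le_eq)
    qed simp
    finally show ?thesis by simp
  qed
  have "2048 * L * (1 - p)^2 / \<epsilon>^2 + 8 * (1 - p) / \<epsilon> + 512 * L + 2 \<le> real n / 16"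
    using t1 t2 nL L4 by linarith
  then show "2048 * L * (1 - p)^2 / \<epsilon>^2 + 8 * (1 - p) / \<epsilon> + 512 * L + 2 \<le> real (n - 1) * p / 4
                          \<and> 5 * L \<le> real (n - 1) * p / 4" using Np nL L by linarith
qed

lemma main_inst:
  fixes n :: nat and \<delta> \<epsilon> :: real
  assumes n: "1 \<le> n" and d0: "0 < \<delta>" and d1: "\<delta> < 1"
    and e0: "20000 * ln (1 / \<delta>) / real n \<le> \<epsilon>" and eps1: "\<epsilon> \<le> 1"
  shows "\<exists>lam. 0 < lam \<and> lam < real n \<and> bitsum_shuffled_dp n lam \<epsilon> \<delta> \<and>
           (if sqrt (41600 * ln (1 / \<delta>) / real n) \<le> \<epsilon>
            then lam \<le> 20800 * ln (1 / \<delta>) / \<epsilon>\<^sup>2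
            else lam \<le> real n - 1 / 1000 * \<epsilon> * real n powr (3 / 2) / sqrt (ln (1 / \<delta>)))"
proof -
  define L where "L = ln (1 / \<delta>)"
  have L0: "0 < L" unfolding L_def using d0 d1 by (intro ln_gt_zero) (simp add: field_simps)
  have n0: "0 < real n" using n by simp
  have e1: "20000 * L \<le> \<epsilon> * real n" using e0 n0 by (simp add: L_def pos_divide_le_eq)
  have eps: "0 < \<epsilon>"
  proof -
    have "0 < 20000 * L / real n" using L0 n0 by simp
    then show ?thesis using e0 by (simp add: L_def)
  qed
  show ?thesis
  proof (cases "sqrt (41600 * L / real n) \<le> \<epsilon>")
    case True
    have "41600 * L / real n \<le> \<epsilon>^2" using True by (rule sqrt_le_D)
    then have e2: "41600 * L \<le> \<epsilon>^2 * real n" using n0 by (simp add: pos_divide_le_eq)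
    define lam where "lam = 20800 * L / \<epsilon>^2"
    note ar = branch1_arith[OF n L0 e1 eps eps1 e2 lam_def refl]
    have dp: "bitsum_shuffled_dp n lam \<epsilon> \<delta>"
      by (rule dp_final[OF n d0 d1 L_def ar(1) ar(2) refl eps ar(4) ar(3)])
    show ?thesis using True ar dp by (intro exI[of _ lam]) (simp add: L_def[symmetric] lam_def)
  next
    case False
    then have e2: "\<epsilon> < sqrt (41600 * L / real n)" by simp
    define lam where "lam = real n - 1/1000 * \<epsilon> * real n powr (3/2) / sqrt L"
    note ar = branch2_arith[OF n L0 e1 eps eps1 e2 lam_def refl]
    have dp: "bitsum_shuffled_dp n lam \<epsilon> \<delta>"
      by (rule dp_final[OF n d0 d1 L_def ar(1) ar(2) refl eps ar(4) ar(3)])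
    show ?thesis using False ar dp by (intro exI[of _ lam]) (simp add: L_def[symmetric] lam_def)
  qed
qed


theorem theorem4p1:
  "\<exists>(\<kappa>1::real) (\<kappa>2::real) (\<kappa>3::real) (\<kappa>4::real) (\<kappa>5::real). \<kappa>1 > 0 \<and> \<kappa>2 > 0 \<and> \<kappa>3 > 0 \<and> \<kappa>4 > 0 \<and> \<kappa>5 > 0 \<and>
     (\<forall>(n::nat) (\<delta>::real) (\<epsilon>::real).
        n \<ge> 1 \<longrightarrow> 0 < \<delta> \<longrightarrow> \<delta> < 1 \<longrightarrow>
        \<kappa>2 * ln (1 / \<delta>) / real n \<le> \<epsilon> \<longrightarrow> \<epsilon> \<le> 1 \<longrightarrow>
        (\<exists>lam::real. 0 < lam \<and> lam < real n \<and>
           bitsum_shuffled_dp n lam \<epsilon> \<delta> \<and>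
           (if \<epsilon> \<ge> sqrt (\<kappa>3 * ln (1 / \<delta>) / real n)
            then lam \<le> \<kappa>4 * ln (1 / \<delta>) / \<epsilon>\<^sup>2
            else lam \<le> real n - \<kappa>5 * \<epsilon> * real n powr (3/2) / sqrt (ln (1 / \<delta>)))))"
  apply (rule exI[of _ 1], rule exI[of _ 20000], rule exI[of _ 41600], rule exI[of _ 20800], rule exI[of _ "1/1000"])
  using main_inst by auto

end
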